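(* Let $n,m\in\mathbb{N}$ be coprime and $\beta\in\mathbb{C}$. Then for every $u\in S(n,\beta)$, $\hat H_{n,m}u=u|_0\sum_{A\in X_m^\star}A$.
   Context: $\Gamma_0(n)=\{\begin{pmatrix}a&b\\c&d\end{pmatrix}\in SL(2,\mathbb{Z}):n\mid c\}$; $S(n,\beta)$ is the space of Maass cusp forms for $\Gamma_0(n)$ with spectral parameter $\beta$. $(f|_0h)(z)=f(hz)$, extended linearly. $B_m=\begin{pmatrix}m&0\\0&1\end{pmatrix}$. $\{R_j^{nm,n}\}_{j\in I_{nm,n}}$ is a system of representatives of the right cosets $\Gamma_0(nm)\backslash\Gamma_0(n)$ and $\hat H_{n,m}u=(u|_0B_m)|_0\sum_jR_j^{nm,n}$. $X_m^\star=\{\begin{pmatrix}c&b\\0&m/c\end{pmatrix}:c\ge1,\ c\mid m,\ 0\le b\le m/c-1,\ \gcd(c,b,m/c)=1\}$. *)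

theory Defs
  imports "HOL-Analysis.Analysis"
begin

text \<open>Integer 2x2 matrices (a b; c d) represented as tuples (a, b, c, d).\<close>
type_synonym mat2 = "int \<times> int \<times> int \<times> int"

fun mmul :: "mat2 \<Rightarrow> mat2 \<Rightarrow> mat2" where
  "mmul (a, b, c, d) (a', b', c', d') =
     (a * a' + b * c', a * b' + b * d', c * a' + d * c', c * b' + d * d')"

fun mdet :: "mat2 \<Rightarrow> int" where
  "mdet (a, b, c, d) = a * d - b * c"

text \<open>Inverse of a determinant-one matrix.\<close>
fun minv :: "mat2 \<Rightarrow> mat2" where
  "minv (a, b, c, d) = (d, - b, - c, a)"

definition SL2Z :: "mat2 set" where
  "SL2Z = {A. mdet A = 1}"

definition Gamma0 :: "nat \<Rightarrow> mat2 set" where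
  "Gamma0 N = {(a, b, c, d). a * d - b * c = 1 \<and> int N dvd c}"

fun mob :: "mat2 \<Rightarrow> complex \<Rightarrow> complex" where
  "mob (a, b, c, d) z = (of_int a * z + of_int b) / (of_int c * z + of_int d)"

text \<open>Weight-0 slash action  (f|_0 h)(z) = f(h z), and its linear extension to
  a formal sum (finite set) of matrices.\<close>
definition slash0 :: "(complex \<Rightarrow> complex) \<Rightarrow> mat2 \<Rightarrow> (complex \<Rightarrow> complex)" where
  "slash0 f h = (\<lambda>z. f (mob h z))"

definition slash_sum :: "(complex \<Rightarrow> complex) \<Rightarrow> mat2 set \<Rightarrow> (complex \<Rightarrow> complex)" where
  "slash_sum f S = (\<lambda>z. \<Sum>h\<in>S. f (mob h z))"

definition Bmat :: "nat \<Rightarrow> mat2" where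
  "Bmat m = (int m, 0, 0, 1)"

text \<open>Rs is a system of representatives of the right cosets
  Gamma0(M) \<setminus> Gamma0(N):  every element of Gamma0(N) lies in Gamma0(M) r for exactly one r in Rs.\<close>
definition coset_reps :: "nat \<Rightarrow> nat \<Rightarrow> mat2 set \<Rightarrow> bool" where
  "coset_reps M N Rs \<longleftrightarrow> Rs \<subseteq> Gamma0 N \<and>
     (\<forall>g\<in>Gamma0 N. \<exists>!r\<in>Rs. mmul g (minv r) \<in> Gamma0 M)"

definition hatH :: "nat \<Rightarrow> nat \<Rightarrow> mat2 set \<Rightarrow> (complex \<Rightarrow> complex) \<Rightarrow> (complex \<Rightarrow> complex)" where
  "hatH n m Rs u = slash_sum (slash0 u (Bmat m)) Rs"

definition Xstar :: "nat \<Rightarrow> mat2 set" where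
  "Xstar m = {(c, b, 0, int m div c) | c b.
      c \<ge> 1 \<and> c dvd int m \<and> 0 \<le> b \<and> b \<le> int m div c - 1 \<and>
      gcd c (gcd b (int m div c)) = 1}"

definition dx :: "(complex \<Rightarrow> complex) \<Rightarrow> complex \<Rightarrow> complex" where
  "dx f z = vector_derivative (\<lambda>t::real. f (z + of_real t)) (at 0)"

definition dy :: "(complex \<Rightarrow> complex) \<Rightarrow> complex \<Rightarrow> complex" where
  "dy f z = vector_derivative (\<lambda>t::real. f (z + \<i> * of_real t)) (at 0)"

fun dw :: "bool list \<Rightarrow> (complex \<Rightarrow> complex) \<Rightarrow> complex \<Rightarrow> complex" where
  "dw [] f = f"
| "dw (b # bs) f = (if b then dx (dw bs f) else dy (dw bs f))"

text \<open>C-infinity on the upper half plane (as a function of the two real variables).\<close>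
definition smooth_H :: "(complex \<Rightarrow> complex) \<Rightarrow> bool" where
  "smooth_H u \<longleftrightarrow> (\<forall>bs z. Im z > 0 \<longrightarrow> dw bs u differentiable (at z))"

text \<open>Maass cusp forms for Gamma0(n) with spectral parameter beta:
  smooth, Gamma0(n)-invariant, eigenfunction of the hyperbolic Laplacian
  -y^2(d_x^2+d_y^2) with eigenvalue 1/4 - beta^2, of moderate growth at every cusp,
  and with vanishing constant term at every cusp.\<close>
definition S :: "nat \<Rightarrow> complex \<Rightarrow> (complex \<Rightarrow> complex) set" where
  "S n \<beta> = {u. smooth_H u \<and>
     (\<forall>g\<in>Gamma0 n. \<forall>z. Im z > 0 \<longrightarrow> u (mob g z) = u z) \<and>
     (\<forall>z. Im z > 0 \<longrightarrow>
        - (complex_of_real ((Im z)\<^sup>2)) * (dx (dx u) z + dy (dy u) z) = (1/4 - \<beta>\<^sup>2) * u z) \<and>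
     (\<forall>\<sigma>\<in>SL2Z. \<exists>C K. \<forall>z. Im z \<ge> 1 \<longrightarrow> norm (u (mob \<sigma> z)) \<le> C * (Im z) powr K) \<and>
     (\<forall>\<sigma>\<in>SL2Z. \<forall>y>0. integral {0..real n} (\<lambda>x. u (mob \<sigma> (Complex x y))) = 0)}"

end

theory Submission
  imports Defs "HOL-Computational_Algebra.Primes"
begin

lemma exists_coprime_shift:
  fixes a b d :: int
  assumes d: "d \<ge> 1" and g: "gcd a (gcd b d) = 1"
  shows "\<exists>k. coprime (b + k * a) d"
proof -
  define K where "K = {k::int. k dvd d \<and> k > 0 \<and> coprime k b}"
  have finK: "finite K"
    by (rule finite_subset[of _ "{1..d}"]) (use d zdvd_imp_le[of _ d] in \<open>auto simp: K_def\<close>)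
  have "1 \<in> K" by (simp add: K_def)
  define k0 where "k0 = Max K"
  have k0K: "k0 \<in> K" using finK \<open>1 \<in> K\<close> unfolding k0_def by (intro Max_in) auto
  have k0max: "k \<le> k0" if "k \<in> K" for k using finK that unfolding k0_def by simp
  have "coprime (b + k0 * a) d"
  proof (rule ccontr)
    assume nc: "\<not> coprime (b + k0 * a) d"
    have "\<bar>gcd (b + k0 * a) d\<bar> \<noteq> 1" using nc by (simp add: coprime_iff_gcd_eq_1)
    then obtain p where p: "prime p" "p dvd gcd (b + k0 * a) d" by (rule prime_factor_int)
    hence p1: "p dvd b + k0 * a" and p2: "p dvd d" by auto
    show False
    proof (cases "p dvd b")
      case True
      hence "p dvd k0 * a" using p1 by (metis dvd_add_right_iff)
      hence "p dvd k0 \<or> p dvd a" using p(1) by (simp add: prime_dvd_mult_iff)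
      thus False
      proof
        assume "p dvd k0"
        hence "p dvd gcd k0 b" using True by simp
        moreover have "gcd k0 b = 1" using k0K by (simp add: K_def coprime_iff_gcd_eq_1)
        ultimately show False using p(1) by (simp add: prime_int_iff)
      next
        assume "p dvd a"
        hence "p dvd gcd a (gcd b d)" using True p2 by simp
        thus False using g p(1) by (simp add: prime_int_iff)
      qed
    next
      case False
      have "p dvd k0"
      proof (rule ccontr)
        assume pk: "\<not> p dvd k0"
        have "coprime p k0" using pk p(1) by (simp add: prime_imp_coprime)
        hence "p * k0 dvd d" using p2 k0K by (simp add: K_def divides_mult)
        moreover have "coprime (p * k0) b" using k0K False p(1)
          by (simp add: K_def prime_imp_coprime)
        moreover have "p * k0 > 0" using k0K p(1) prime_gt_0_int by (simp add: K_def)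
        ultimately have "p * k0 \<in> K" by (simp add: K_def)
        hence "p * k0 \<le> k0" by (rule k0max)
        moreover have "p \<ge> 2" using p(1) prime_ge_2_int by blast
        ultimately show False using k0K by (simp add: K_def)
      qed
      hence "p dvd k0 * a" by simp
      hence "p dvd b" using p1 by (metis dvd_add_left_iff)
      thus False using False by simp
    qed
  qed
  thus ?thesis by blast
qed
lemma mmul_assoc: "mmul (mmul x y) w = mmul x (mmul y w)"
  by (cases x rule: prod_cases4; cases y rule: prod_cases4; cases w rule: prod_cases4)
     (simp add: algebra_simps)

lemma mdet_mmul: "mdet (mmul x y) = mdet x * mdet y"
  by (cases x rule: prod_cases4; cases y rule: prod_cases4) (simp add: algebra_simps)

lemma minv_mmul: "mdet g = 1 \<Longrightarrow> mmul (minv g) (mmul g x) = x"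
  by (cases x rule: prod_cases4; cases g rule: prod_cases4) (simp add: algebra_simps)

lemma mmul_minv_right: "mdet g = 1 \<Longrightarrow> mmul (mmul x (minv g)) g = x"
  by (cases x rule: prod_cases4; cases g rule: prod_cases4) (simp add: algebra_simps)

lemma mmul_minv_self: "mdet g = 1 \<Longrightarrow> mmul g (minv g) = (1,0,0,1)"
  by (cases g rule: prod_cases4) (simp add: algebra_simps)

lemma Gamma0_iff: "(a,b,c,d) \<in> Gamma0 N \<longleftrightarrow> a*d-b*c=1 \<and> int N dvd c"
  by (simp add: Gamma0_def)

lemma Gamma0_det: "g \<in> Gamma0 N \<Longrightarrow> mdet g = 1"
  by (cases g rule: prod_cases4) (simp add: Gamma0_def)

lemma Gamma0_mmul: "g \<in> Gamma0 N \<Longrightarrow> h \<in> Gamma0 N \<Longrightarrow> mmul g h \<in> Gamma0 N"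
proof (cases g rule: prod_cases4, cases h rule: prod_cases4)
  fix a b c d a' b' c' d'
  assume "g \<in> Gamma0 N" "h \<in> Gamma0 N" "g = (a,b,c,d)" "h = (a',b',c',d')"
  thus ?thesis
    using mdet_mmul[of g h]
    by (auto simp: Gamma0_def algebra_simps)
qed

lemma Gamma0_minv: "g \<in> Gamma0 N \<Longrightarrow> minv g \<in> Gamma0 N"
  by (cases g rule: prod_cases4) (auto simp: Gamma0_def algebra_simps)

lemma Gamma0_one: "(1,0,0,1) \<in> Gamma0 N"
  by (simp add: Gamma0_def)

lemma den_nonzero:
  fixes c d :: int
  assumes "(c,d) \<noteq> (0,0)" "Im z > 0"
  shows "of_int c * z + of_int d \<noteq> 0"
proof
  assume h: "of_int c * z + of_int d = 0"
  hence "Im (of_int c * z + of_int d) = 0" by simp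
  hence "c = 0" using assms(2) by simp
  with h assms(1) show False by simp
qed

lemma div_div_cancel: "(D::complex) \<noteq> 0 \<Longrightarrow> (X / D) / (Y / D) = X / Y"
  by (cases "Y = 0") (simp_all add: field_simps)

lemma mob_mmul:
  assumes "(c,d) \<noteq> (0,0)" "Im z > 0"
  shows "mob (mmul A (a,b,c,d)) z = mob A (mob (a,b,c,d) z)"
proof (cases A rule: prod_cases4)
  case (fields a' b' c' d')
  define D where "D = of_int c * z + of_int d"
  define N where "N = of_int a * z + of_int b"
  have nz: "D \<noteq> 0" unfolding D_def by (rule den_nonzero[OF assms])
  have e1: "of_int a' * (N / D) + of_int b' = (of_int a' * N + of_int b' * D) / D"
    using nz by (simp add: field_simps)
  have e2: "of_int c' * (N / D) + of_int d' = (of_int c' * N + of_int d' * D) / D"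
    using nz by (simp add: field_simps)
  have "mob A (mob (a,b,c,d) z) = (of_int a' * (N / D) + of_int b') / (of_int c' * (N / D) + of_int d')"
    by (simp add: fields N_def D_def)
  also have "\<dots> = (of_int a' * N + of_int b' * D) / (of_int c' * N + of_int d' * D)"
    unfolding e1 e2 using nz by (rule div_div_cancel)
  also have "\<dots> = mob (mmul A (a,b,c,d)) z"
    by (simp add: fields N_def D_def algebra_simps)
  finally show ?thesis by simp
qed

lemma Im_mob_pos:
  assumes "mdet M > 0" "Im z > 0"
  shows "Im (mob M z) > 0"
proof (cases M rule: prod_cases4)
  case (fields a b c d)
  have det: "a*d - b*c > 0" using assms(1) fields by simp
  hence "(c,d) \<noteq> (0,0)" by auto
  define w where "w = of_int c * z + of_int d"
  define N where "N = of_int a * z + of_int b"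
  have nz: "w \<noteq> 0" unfolding w_def using den_nonzero assms(2) \<open>(c,d) \<noteq> (0,0)\<close> by blast
  have "Im (N / w) = (Im N * Re w - Re N * Im w) / ((Re w)^2 + (Im w)^2)"
    by (simp add: Im_divide power2_eq_square)
  also have "Im N * Re w - Re N * Im w = of_int (a*d - b*c) * Im z"
    by (simp add: N_def w_def algebra_simps)
  finally have eq: "Im (mob M z) = of_int (a*d - b*c) * Im z / ((Re w)^2 + (Im w)^2)"
    by (simp add: fields N_def w_def)
  have "Re w \<noteq> 0 \<or> Im w \<noteq> 0" using nz complex_eqI[of w 0] by auto
  hence pos: "(Re w)^2 + (Im w)^2 > 0" by (simp add: sum_power2_gt_zero_iff)
  have p1: "(0::real) < of_int (a*d - b*c)" using det by (simp only: of_int_0_less_iff)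
  show ?thesis unfolding eq by (intro divide_pos_pos mult_pos_pos p1 assms(2) pos)
qed


lemma exists_T:
  fixes A B C D :: int
  assumes det: "A*D - B*C = int m" and m: "m \<ge> 1" and nC: "int n dvd C"
    and cop: "coprime n m" and cCD: "coprime C D"
  shows "\<exists>\<gamma>\<in>Gamma0 n. mmul \<gamma> (A,B,C,D) \<in> Xstar m"
proof -
  define g where "g = gcd A C"
  have nz: "A \<noteq> 0 \<or> C \<noteq> 0" using det m by auto
  hence gpos: "g > 0" by (simp add: g_def)
  define A' where "A' = A div g"
  define C' where "C' = C div g"
  have hA: "A = g * A'" by (simp add: A'_def g_def)
  have hC: "C = g * C'" by (simp add: C'_def g_def)
  have cAC: "coprime A' C'" unfolding A'_def C'_def g_def using nz by (rule div_gcd_coprime)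
  have gm: "g dvd int m" using det by (metis dvd_diff dvd_mult dvd_mult2 g_def gcd_dvd1 gcd_dvd2)
  have copi: "coprime (int n) (int m)" using cop by simp
  have cng: "coprime (int n) g" using gm copi by (metis coprime_mult_right_iff dvd_def)
  have nC': "int n dvd C'" using nC cng hC by (metis coprime_dvd_mult_right_iff)
  obtain u v where uv: "u * A' + v * C' = 1" using bezout_int[of A' C'] cAC
    by (auto simp: coprime_iff_gcd_eq_1)
  define d1 where "d1 = A' * D - C' * B"
  have gd1: "g * d1 = int m" using det by (simp add: d1_def hA hC algebra_simps)
  have "0 < g * d1" using gd1 m by simp
  hence d1pos: "d1 > 0" using gpos by (simp add: zero_less_mult_iff)
  define b1 where "b1 = u * B + v * D"
  define k where "k = b1 div d1"
  define \<gamma> where "\<gamma> = (u + k * C', v - k * A', - C', A')"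
  have g0: "\<gamma> \<in> Gamma0 n"
    using uv nC' by (simp add: \<gamma>_def Gamma0_def algebra_simps)
  have e1: "(u + k*C')*(g*A') + (v - k*A')*(g*C') = g"
  proof -
    have "(u + k*C')*(g*A') + (v - k*A')*(g*C') = g * (u * A' + v * C')" by (simp add: algebra_simps)
    thus ?thesis by (simp add: uv)
  qed
  have e2: "(u + k*C')*B + (v - k*A')*D = b1 - k * d1"
    by (simp add: b1_def d1_def algebra_simps)
  have e3: "- C' * (g*A') + A' * (g*C') = 0" by (simp add: algebra_simps)
  have e4: "- C' * B + A' * D = d1" by (simp add: d1_def algebra_simps)
  have "mmul \<gamma> (A,B,C,D) = (g, b1 - k * d1, 0, d1)"
    unfolding \<gamma>_def hA hC mmul.simps e1 e2 e3 e4 ..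
  hence T: "mmul \<gamma> (A,B,C,D) = (g, b1 mod d1, 0, d1)"
    by (simp add: k_def minus_div_mult_eq_mod[symmetric] mult.commute)
  have "(A,B,C,D) = mmul (minv \<gamma>) (mmul \<gamma> (A,B,C,D))"
    using g0 by (simp add: minv_mmul Gamma0_det)
  also have "\<dots> = mmul (minv \<gamma>) (g, b1 mod d1, 0, d1)" by (simp add: T)
  finally have CD: "C = C' * g" "D = C' * (b1 mod d1) + (u + k * C') * d1"
    by (simp_all add: \<gamma>_def)
  define h where "h = gcd g (gcd (b1 mod d1) d1)"
  have hb: "h dvd b1 mod d1" and hd: "h dvd d1" and hg: "h dvd g"
    unfolding h_def by (meson dvd_trans gcd_dvd1 gcd_dvd2)+
  have "h dvd C" unfolding CD using hg by simp
  moreover have "h dvd D" unfolding CD using hb hd by (simp add: dvd_add)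
  ultimately
  have "h dvd 1" using cCD by (metis coprime_common_divisor)
  hence h1: "h = 1" using h_def by simp
  have dm: "int m div g = d1" using gd1 gpos by (metis nonzero_mult_div_cancel_left less_irrefl)
  have "(g, b1 mod d1, 0, d1) \<in> Xstar m"
    unfolding Xstar_def using gpos gm h1 d1pos dm
    by (auto simp: h_def intro!: exI[of _ g] exI[of _ "b1 mod d1"])
  thus ?thesis using g0 T by (intro bexI[of _ \<gamma>]) simp_all
qed
lemma Xstar_E:
  assumes "T \<in> Xstar m"
  obtains a b where "T = (a, b, 0, int m div a)" "a \<ge> 1" "a dvd int m" "0 \<le> b" "b \<le> int m div a - 1"
     "gcd a (gcd b (int m div a)) = 1"
proof -
  have "\<exists>c b. T = (c, b, 0, int m div c) \<and> c \<ge> 1 \<and> c dvd int m \<and> 0 \<le> b \<and> b \<le> int m div c - 1 \<and>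
      gcd c (gcd b (int m div c)) = 1"
    using assms unfolding Xstar_def by (rule CollectD)
  then obtain c b where "T = (c, b, 0, int m div c)" "c \<ge> 1" "c dvd int m" "0 \<le> b" "b \<le> int m div c - 1"
      "gcd c (gcd b (int m div c)) = 1" by (elim exE conjE)
  thus ?thesis by (rule that)
qed
lemma Xstar_uniq:
  assumes "mdet \<delta> = 1" "T \<in> Xstar m" "T' \<in> Xstar m" "mmul \<delta> T = T'"
  shows "T = T'"
proof -
  obtain a b where T: "T = (a, b, 0, int m div a)" and a: "a \<ge> 1" and b: "0 \<le> b" "b \<le> int m div a - 1"
    using assms(2) unfolding Xstar_def by blast
  obtain a' b' where T': "T' = (a', b', 0, int m div a')" and a': "a' \<ge> 1" and b': "0 \<le> b'" "b' \<le> int m div a' - 1"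
    using assms(3) unfolding Xstar_def by blast
  obtain p q s t where \<delta>: "\<delta> = (p,q,s,t)" by (cases \<delta> rule: prod_cases4)
  define d where "d = int m div a"
  define d' where "d' = int m div a'"
  have "mmul (p,q,s,t) (a,b,0,d) = (a',b',0,d')"
    using assms(4) unfolding \<delta> T T' d_def d'_def .
  hence "p * a + q * 0 = a' \<and> p * b + q * d = b' \<and> s * a + t * 0 = 0 \<and> s * b + t * d = d'"
    by (simp only: mmul.simps prod.inject)
  hence eq: "p * a = a'" "p * b + q * d = b'" "s * a = 0" "s * b + t * d = d'"
    by simp_all
  have s0: "s = 0" using eq(3) a by simp
  have "p * t = 1" using assms(1) s0 by (simp add: \<delta>)
  hence "p = 1 \<and> t = 1 \<or> p = -1 \<and> t = -1" by (simp add: zmult_eq_1_iff)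
  moreover have "p > 0"
  proof -
    have "0 < p * a" using eq(1) a' by simp
    thus ?thesis using a by (simp add: zero_less_mult_iff)
  qed
  ultimately have pt: "p = 1" "t = 1" by auto
  have aa: "a' = a" using eq(1) pt by simp
  have dd: "d' = d" using aa d_def d'_def by simp
  have "q * d = b' - b" using eq(2) pt by simp
  moreover have "b' - b < d" "b - b' < d" using b b' aa d_def d'_def by auto
  moreover have dpos: "d \<ge> 0" using b d_def by simp
  ultimately have "q = 0"
  proof -
    assume qd: "q * d = b' - b" and l1: "b' - b < d" and l2: "b - b' < d"
    have "\<not> q \<ge> 1"
    proof
      assume "q \<ge> 1"
      hence "1 * d \<le> q * d" using dpos by (intro mult_right_mono)
      thus False using qd l1 by simp
    qed
    moreover have "\<not> q \<le> -1"
    proof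
      assume "q \<le> -1"
      hence "q * d \<le> (-1) * d" using dpos by (intro mult_right_mono)
      thus False using qd l2 by simp
    qed
    ultimately show "q = 0" by simp
  qed
  hence "b' = b" using eq(2) pt by simp
  thus ?thesis unfolding T T' aa by simp
qed

lemma surj_exists:
  assumes "T \<in> Xstar m" "coprime n m" "m \<ge> 1"
  shows "\<exists>\<gamma>\<in>Gamma0 n. \<exists>g\<in>Gamma0 n. mmul \<gamma> T = mmul (Bmat m) g"
proof -
  obtain a b where T: "T = (a, b, 0, int m div a)" and a: "a \<ge> 1" and adv: "a dvd int m"
     and b: "0 \<le> b" and g: "gcd a (gcd b (int m div a)) = 1"
    using assms(1) by (rule Xstar_E)
  define d where "d = int m div a"
  have ad: "a * d = int m" using adv by (simp add: d_def)
  have "0 < a * d" using ad assms(3) by simp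
  hence d1: "d \<ge> 1" using a by (simp add: zero_less_mult_iff)
  have g2: "gcd a (gcd b d) = 1" using g by (simp add: d_def)
  from exists_coprime_shift[OF d1 g2] obtain k where k: "coprime (b + k * a) d" by (elim exE)
  define q where "q = - (b + k * a)"
  have "coprime (int n) (int m)" using assms(2) by simp
  hence "coprime (int n) (a * d)" using ad by simp
  hence "coprime d (int n)" by (simp add: coprime_commute)
  moreover have "coprime d q"
  proof -
    have "coprime d (b + k * a)" using k by (simp add: coprime_commute)
    thus ?thesis unfolding q_def by (simp only: coprime_minus_right_iff)
  qed
  ultimately have "coprime d (q * int n)" by simp
  then obtain x y where xy: "x * d + y * (q * int n) = 1" using bezout_int[of d "q * int n"]
    by (auto simp: coprime_iff_gcd_eq_1)
  define s where "s = - (y * int n)"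
  define \<gamma> :: mat2 where "\<gamma> = (d, q, s, x)"
  define g' :: mat2 where "g' = (1, -k, s * a, s * b + x * d)"
  have "\<gamma> \<in> Gamma0 n" using xy by (simp add: \<gamma>_def s_def Gamma0_def algebra_simps)
  moreover have "g' \<in> Gamma0 n"
  proof -
    have "s * b + x * d + k * (s * a) = x * d - s * q" by (simp add: q_def algebra_simps)
    also have "\<dots> = 1" using xy by (simp add: s_def algebra_simps)
    finally show ?thesis by (simp add: g'_def Gamma0_def s_def algebra_simps)
  qed
  moreover have "mmul \<gamma> T = mmul (Bmat m) g'"
  proof -
    have "d * b + q * d = - k * int m" by (simp add: q_def ad[symmetric] algebra_simps)
    thus ?thesis using ad by (simp add: \<gamma>_def T g'_def Bmat_def d_def[symmetric] algebra_simps)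
  qed
  ultimately show ?thesis by blast
qed

lemma Bmat_conj:
  assumes "h \<in> Gamma0 (n * m)" "m \<ge> 1"
  shows "\<exists>h'\<in>Gamma0 n. mmul (Bmat m) h = mmul h' (Bmat m)"
proof -
  obtain a b c d where h: "h = (a,b,c,d)" by (cases h rule: prod_cases4)
  have det: "a*d - b*c = 1" and dv: "int (n*m) dvd c" using assms h by (auto simp: Gamma0_def)
  obtain c' where c': "c = int n * int m * c'" using dv by (auto simp: dvd_def)
  define h' where "h' = (a, int m * b, int n * c', d)"
  have "h' \<in> Gamma0 n" using det by (simp add: h'_def Gamma0_def c' algebra_simps)
  moreover have "mmul (Bmat m) h = mmul h' (Bmat m)"
    by (simp add: h h'_def Bmat_def c' algebra_simps)
  ultimately show ?thesis by blast
qed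

lemma Bmat_conj_back:
  assumes "\<delta> \<in> Gamma0 n" "g \<in> Gamma0 n" "mmul \<delta> (Bmat m) = mmul (Bmat m) g" "m \<ge> 1"
  shows "g \<in> Gamma0 (n * m)"
proof -
  obtain a b c d where g: "g = (a,b,c,d)" by (cases g rule: prod_cases4)
  obtain p q s t where \<delta>: "\<delta> = (p,q,s,t)" by (cases \<delta> rule: prod_cases4)
  have "c = s * int m" using assms(3) by (simp add: g \<delta> Bmat_def)
  moreover have "int n dvd s" using assms(1) by (simp add: \<delta> Gamma0_def)
  ultimately have "int (n*m) dvd c" by (simp add: mult_dvd_mono)
  thus ?thesis using assms(2) by (simp add: g Gamma0_def)
qed

lemma mmul_minv_cancel: "mdet g = 1 \<Longrightarrow> mmul (mmul x g) (minv g) = x"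
  by (cases x rule: prod_cases4; cases g rule: prod_cases4) (simp add: algebra_simps)

lemma mdet_minv: "mdet (minv g) = mdet g"
  by (cases g rule: prod_cases4) (simp add: algebra_simps)

lemma mob_mmul':
  assumes "mdet B \<noteq> 0" "Im z > 0"
  shows "mob (mmul A B) z = mob A (mob B z)"
proof (cases B rule: prod_cases4)
  case (fields a b c d)
  hence "(c,d) \<noteq> (0,0)" using assms(1) by auto
  thus ?thesis using mob_mmul[OF _ assms(2)] fields by simp
qed

theorem mainTheorem4:
  fixes n m :: nat and \<beta> :: complex and u :: "complex \<Rightarrow> complex" and Rs :: "mat2 set"
  assumes "n \<ge> 1" and "m \<ge> 1" and "coprime n m"
    and "u \<in> S n \<beta>"
    and "coset_reps (n * m) n Rs"
  shows "\<forall>z. Im z > 0 \<longrightarrow> hatH n m Rs u z = slash_sum u (Xstar m) z"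
proof (intro allI impI)
  fix z :: complex assume z: "Im z > 0"
  have inv: "\<forall>g\<in>Gamma0 n. \<forall>z. Im z > 0 \<longrightarrow> u (mob g z) = u z" using assms(4) by (simp add: S_def)
  have RsG: "Rs \<subseteq> Gamma0 n" and cos: "\<forall>g\<in>Gamma0 n. \<exists>!r\<in>Rs. mmul g (minv r) \<in> Gamma0 (n*m)"
    using assms(5) by (simp_all add: coset_reps_def)
  define M where "M r = mmul (Bmat m) r" for r
  have detM: "mdet (M r) = int m" if "r \<in> Gamma0 n" for r
    using Gamma0_det[OF that] by (simp add: M_def mdet_mmul Bmat_def)
  have exT: "\<exists>\<gamma>\<in>Gamma0 n. mmul \<gamma> (M r) \<in> Xstar m" if rr: "r \<in> Gamma0 n" for r
  proof -
    obtain a b c d where r: "r = (a,b,c,d)" by (cases r rule: prod_cases4)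
    have det: "a*d - b*c = 1" and nc: "int n dvd c" using rr r by (simp_all add: Gamma0_def)
    have cop: "coprime c d"
    proof (rule coprimeI)
      fix k assume "k dvd c" "k dvd d"
      hence "k dvd a*d - b*c" by (simp add: dvd_diff)
      thus "is_unit k" using det by simp
    qed
    have Mr: "M r = (int m * a, int m * b, c, d)" by (simp add: M_def r Bmat_def)
    have "(int m * a) * d - (int m * b) * c = int m * (a*d - b*c)" by (simp add: algebra_simps)
    hence d2: "(int m * a) * d - (int m * b) * c = int m" using det by simp
    show ?thesis unfolding Mr by (rule exists_T[OF d2 assms(2) nc assms(3) cop])
  qed
  define phi where "phi r = (SOME A. A \<in> Xstar m \<and> (\<exists>\<gamma>\<in>Gamma0 n. mmul \<gamma> (M r) = A))" for r
  have phi: "phi r \<in> Xstar m \<and> (\<exists>\<gamma>\<in>Gamma0 n. mmul \<gamma> (M r) = phi r)" if rr: "r \<in> Gamma0 n" for r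
  proof -
    obtain \<gamma> where g: "\<gamma> \<in> Gamma0 n" "mmul \<gamma> (M r) \<in> Xstar m" using exT[OF rr] by blast
    show ?thesis unfolding phi_def
      by (rule someI[of _ "mmul \<gamma> (M r)"]) (use g in blast)
  qed
  have phi_uniq: "phi r = A" if th: "r \<in> Gamma0 n" "A \<in> Xstar m" "\<gamma> \<in> Gamma0 n" "mmul \<gamma> (M r) = A" for r A \<gamma>
  proof -
    obtain \<gamma>' where g': "\<gamma>' \<in> Gamma0 n" "mmul \<gamma>' (M r) = phi r" using phi[OF th(1)] by blast
    have "mmul (mmul \<gamma>' (minv \<gamma>)) A = mmul \<gamma>' (mmul (minv \<gamma>) (mmul \<gamma> (M r)))"
      using th(4) by (simp add: mmul_assoc)
    also have "\<dots> = phi r" using g' Gamma0_det[OF th(3)] by (simp add: minv_mmul)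
    finally have e: "mmul (mmul \<gamma>' (minv \<gamma>)) A = phi r" .
    have "mmul \<gamma>' (minv \<gamma>) \<in> Gamma0 n" using g'(1) th(3) by (simp add: Gamma0_mmul Gamma0_minv)
    hence "mdet (mmul \<gamma>' (minv \<gamma>)) = 1" by (rule Gamma0_det)
    from Xstar_uniq[OF this th(2) _ e] phi[OF th(1)] show ?thesis by simp
  qed
  have bij: "bij_betw phi Rs (Xstar m)"
  proof (rule bij_betw_imageI)
    show "inj_on phi Rs"
    proof (rule inj_onI)
      fix r r' assume r: "r \<in> Rs" "r' \<in> Rs" "phi r = phi r'"
      have rG: "r \<in> Gamma0 n" and r'G: "r' \<in> Gamma0 n" using r RsG by auto
      obtain \<gamma> where g: "\<gamma> \<in> Gamma0 n" "mmul \<gamma> (M r) = phi r" using phi[OF rG] by blast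
      obtain \<gamma>' where g': "\<gamma>' \<in> Gamma0 n" "mmul \<gamma>' (M r') = phi r'" using phi[OF r'G] by blast
      define \<delta> where "\<delta> = mmul (minv \<gamma>') \<gamma>"
      have \<delta>G: "\<delta> \<in> Gamma0 n" using g g' by (simp add: \<delta>_def Gamma0_mmul Gamma0_minv)
      have "mmul \<delta> (M r) = mmul (minv \<gamma>') (mmul \<gamma> (M r))" by (simp add: \<delta>_def mmul_assoc)
      also have "\<dots> = mmul (minv \<gamma>') (mmul \<gamma>' (M r'))" using g g' r(3) by simp
      also have "\<dots> = M r'" using Gamma0_det[OF g'(1)] by (simp add: minv_mmul)
      finally have dM: "mmul \<delta> (M r) = M r'" .
      define g0 where "g0 = mmul r' (minv r)"
      have g0G: "g0 \<in> Gamma0 n" using rG r'G by (simp add: g0_def Gamma0_mmul Gamma0_minv)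
      have "mmul (Bmat m) g0 = mmul (M r') (minv r)" by (simp add: g0_def M_def mmul_assoc)
      also have "\<dots> = mmul (mmul \<delta> (M r)) (minv r)" using dM by simp
      also have "\<dots> = mmul \<delta> (mmul (mmul (Bmat m) r) (minv r))" by (simp add: M_def mmul_assoc)
      also have "\<dots> = mmul \<delta> (Bmat m)" using Gamma0_det[OF rG] by (simp add: mmul_minv_cancel)
      finally have "mmul \<delta> (Bmat m) = mmul (Bmat m) g0" by simp
      hence g0N: "mmul r' (minv r) \<in> Gamma0 (n*m)"
        using Bmat_conj_back[OF \<delta>G g0G _ assms(2)] by (simp add: g0_def)
      have "mmul r' (minv r') \<in> Gamma0 (n*m)"
        using Gamma0_det[OF r'G] by (simp add: mmul_minv_self Gamma0_one)
      with g0N cos r'G r(1,2) show "r = r'" by metis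
    qed
    show "phi ` Rs = Xstar m"
    proof
      show "phi ` Rs \<subseteq> Xstar m" using phi RsG by auto
      show "Xstar m \<subseteq> phi ` Rs"
      proof
        fix A assume A: "A \<in> Xstar m"
        obtain \<gamma> g where g: "\<gamma> \<in> Gamma0 n" "g \<in> Gamma0 n" "mmul \<gamma> A = mmul (Bmat m) g"
          using surj_exists[OF A assms(3) assms(2)] by blast
        obtain r where r: "r \<in> Rs" "mmul g (minv r) \<in> Gamma0 (n*m)" using cos g(2) by blast
        have rG: "r \<in> Gamma0 n" using r RsG by auto
        define h where "h = mmul g (minv r)"
        obtain h' where h': "h' \<in> Gamma0 n" "mmul (Bmat m) h = mmul h' (Bmat m)"
          using Bmat_conj[OF _ assms(2)] r(2) h_def by blast
        have gh: "g = mmul h r" using Gamma0_det[OF rG] by (simp add: h_def mmul_minv_right)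
        have "mmul \<gamma> A = mmul h' (M r)"
          using g(3) h'(2) by (simp add: gh M_def mmul_assoc[symmetric])
        hence "mmul (minv \<gamma>) (mmul h' (M r)) = A" using Gamma0_det[OF g(1)] by (metis minv_mmul)
        hence "mmul (mmul (minv \<gamma>) h') (M r) = A" by (simp add: mmul_assoc)
        moreover have "mmul (minv \<gamma>) h' \<in> Gamma0 n" using g(1) h'(1) by (simp add: Gamma0_mmul Gamma0_minv)
        ultimately have "phi r = A" using phi_uniq[OF rG A] by blast
        thus "A \<in> phi ` Rs" using r(1) by blast
      qed
    qed
  qed
  have "hatH n m Rs u z = (\<Sum>r\<in>Rs. u (mob (Bmat m) (mob r z)))"
    by (simp add: hatH_def slash_sum_def slash0_def)
  also have "\<dots> = (\<Sum>r\<in>Rs. u (mob (phi r) z))"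
  proof (rule sum.cong[OF refl])
    fix r assume "r \<in> Rs"
    hence rG: "r \<in> Gamma0 n" using RsG by auto
    have e1: "mob (Bmat m) (mob r z) = mob (M r) z"
      unfolding M_def using Gamma0_det[OF rG] z by (simp add: mob_mmul')
    obtain \<gamma> where g: "\<gamma> \<in> Gamma0 n" "mmul \<gamma> (M r) = phi r" using phi[OF rG] by blast
    have dpos: "mdet (M r) > 0" using detM[OF rG] assms(2) by simp
    have "mob (phi r) z = mob \<gamma> (mob (M r) z)"
      unfolding g(2)[symmetric] using dpos z by (simp add: mob_mmul')
    moreover have "Im (mob (M r) z) > 0" by (rule Im_mob_pos[OF dpos z])
    ultimately have "u (mob (phi r) z) = u (mob (M r) z)" using inv g(1) by simp
    thus "u (mob (Bmat m) (mob r z)) = u (mob (phi r) z)" using e1 by simp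
  qed
  also have "\<dots> = (\<Sum>A\<in>Xstar m. u (mob A z))" by (rule sum.reindex_bij_betw[OF bij])
  also have "\<dots> = slash_sum u (Xstar m) z" by (simp add: slash_sum_def)
  finally show "hatH n m Rs u z = slash_sum u (Xstar m) z" .
qed


end
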